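(* Let $f\in\mathcal S_{\mathbf M}$. Then for any $\tau>0$, $n\in\mathbb N$ and $\varphi\in\Phi$, $$E_n(f)^*_{\mathbf M}\le C_{n,\varphi}(\tau)\,\omega_\varphi\Big(f,\frac{\tau}{n}\Big)^*_{\mathbf M},$$ where $$C_{n,\varphi}(\tau):=\inf_{v\in V(\tau)}\frac{v(\tau)-v(0)}{I_{n,\varphi}(\tau,v)},\qquad I_{n,\varphi}(\tau,v):=\inf_{k\in\mathbb N,\,k\ge n}\int_0^\tau\varphi\Big(\frac{ku}{n}\Big)\,dv(u).$$ Moreover, there exists a function $v^*\in V(\tau)$ at which the infimum over $v\in V(\tau)$ in the definition of $C_{n,\varphi}(\tau)$ is attained.
   Context: $L$ is the space of $2\pi$-periodic Lebesgue integrable functions, with Fourier coefficients $\widehat f(k)=(2\pi)^{-1}\int_0^{2\pi}f(x)e^{-\mathrm{i}kx}\,dx$, $k\in\mathbb Z$. Let $\mathbf M=\{M_k\}_{k\in\mathbb Z}$ be a sequence of Orlicz functions on $[0,\infty)$ (each $M_k$ nondecreasing and convex, $M_k(0)=0$, $M_k(u)\to\infty$ as $u\to\infty$). For a complex sequence $c=\{c_k\}_{k\in\mathbb Z}$, its Luxemburg norm is $\|c\|_{\mathbf M}=\inf\{a>0:\sum_kM_k(|c_k|/a)\le1\}$; with $\tilde M_k(v)=\sup\{uv-M_k(u):u\ge0\}$ and $\Lambda$ the set of sequences $\lambda=\{\lambda_k\}$ of positive numbers with $\sum_k\tilde M_k(\lambda_k)\le1$, its Orlicz norm is $\|c\|^*_{\mathbf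 M}=\sup\{\sum_k\lambda_k|c_k|:\lambda\in\Lambda\}$. $\mathcal S_{\mathbf M}$ is the space of $f\in L$ with $\|f\|_{\mathbf M}:=\|\{\widehat f(k)\}\|_{\mathbf M}<\infty$; also $\|f\|^*_{\mathbf M}:=\|\{\widehat f(k)\}\|^*_{\mathbf M}$. $E_n(f)^*_{\mathbf M}=\inf\{\|f-t\|^*_{\mathbf M}: t\in\mathcal T_{n-1}\}$, where $\mathcal T_{n-1}$ is the set of trigonometric polynomials $\sum_{|k|\le n-1}c_ke^{\mathrm{i}kx}$, $c_k\in\mathbb C$. $\Phi$ is the set of all continuous, bounded, nonnegative, even functions $\varphi:\mathbb R\to\mathbb R$ with $\varphi(0)=0$ such that $\{t:\varphi(t)=0\}$ has Lebesgue measure zero. For $\varphi\in\Phi$, $h\in\mathbb R$, $\Delta_h^\varphi f$ denotes the sequence $\{\varphi(kh)\widehat f(k)\}_{k\in\mathbb Z}$, and $\omega_\varphi(f,\delta)^*_{\mathbf M}=\sup_{|h|\le\delta}\|\Delta_h^\varphi f\|^*_{\mathbf M}$. $V(\tau)$ is the set of bounded nondecreasing functions $v$ on $[0,\tau]$ that are not constant on $[0,\tau]$; the integrals are Lebesgue–Stieltjes integrals. *)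

theory Defs
  imports "HOL-Analysis.Analysis"
begin

definition in_L :: "(real \<Rightarrow> complex) \<Rightarrow> bool" where
  "in_L f \<longleftrightarrow> (\<forall>x. f (x + 2 * pi) = f x) \<and> set_integrable lebesgue {0..2*pi} f"

definition fourier_coeff :: "(real \<Rightarrow> complex) \<Rightarrow> int \<Rightarrow> complex" where
  "fourier_coeff f k =
     complex_of_real (1 / (2 * pi)) *
       (LINT x:{0..2*pi}|lebesgue. f x * exp (- (\<i> * of_int k * complex_of_real x)))"

definition orlicz_fun :: "(real \<Rightarrow> real) \<Rightarrow> bool" where
  "orlicz_fun M \<longleftrightarrow> mono_on {0..} M \<and> convex_on {0..} M \<and> M 0 = 0 \<and>
     filterlim M at_top at_top"

(* Luxemburg norm of a sequence (value +\<infinity> if the defining set is empty) *)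
definition lux_norm :: "(int \<Rightarrow> real \<Rightarrow> real) \<Rightarrow> (int \<Rightarrow> complex) \<Rightarrow> ennreal" where
  "lux_norm M c = (INF a \<in> {a::real. a > 0 \<and>
       (\<Sum>\<^sub>\<infinity>k\<in>(UNIV::int set). ennreal (M k (norm (c k) / a))) \<le> 1}. ennreal a)"

definition conj_fun :: "(real \<Rightarrow> real) \<Rightarrow> real \<Rightarrow> ennreal" where
  "conj_fun M v = (SUP u \<in> {0::real..}. ennreal (u * v - M u))"

definition Lambda_set :: "(int \<Rightarrow> real \<Rightarrow> real) \<Rightarrow> (int \<Rightarrow> real) set" where
  "Lambda_set M = {lam. (\<forall>k. lam k > 0) \<and>
       (\<Sum>\<^sub>\<infinity>k\<in>(UNIV::int set). conj_fun (M k) (lam k)) \<le> 1}"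

definition orl_norm :: "(int \<Rightarrow> real \<Rightarrow> real) \<Rightarrow> (int \<Rightarrow> complex) \<Rightarrow> ennreal" where
  "orl_norm M c = (SUP lam \<in> Lambda_set M.
       (\<Sum>\<^sub>\<infinity>k\<in>(UNIV::int set). ennreal (lam k * norm (c k))))"

definition trig_polys :: "nat \<Rightarrow> (real \<Rightarrow> complex) set" where
  "trig_polys m = {t. \<exists>c :: int \<Rightarrow> complex.
       t = (\<lambda>x. \<Sum>k\<in>{-int m..int m}. c k * exp (\<i> * of_int k * complex_of_real x))}"

definition best_approx :: "(int \<Rightarrow> real \<Rightarrow> real) \<Rightarrow> nat \<Rightarrow> (real \<Rightarrow> complex) \<Rightarrow> ennreal" where
  "best_approx M n f = (INF t \<in> trig_polys (n - 1).
       orl_norm M (fourier_coeff (\<lambda>x. f x - t x)))"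

definition Phi_class :: "(real \<Rightarrow> real) set" where
  "Phi_class = {\<phi>. continuous_on UNIV \<phi> \<and> bounded (range \<phi>) \<and> (\<forall>t. \<phi> t \<ge> 0) \<and>
       (\<forall>t. \<phi> (- t) = \<phi> t) \<and> \<phi> 0 = 0 \<and> {t. \<phi> t = 0} \<in> null_sets lborel}"

definition modulus :: "(int \<Rightarrow> real \<Rightarrow> real) \<Rightarrow> (real \<Rightarrow> real) \<Rightarrow> (real \<Rightarrow> complex) \<Rightarrow> real \<Rightarrow> ennreal" where
  "modulus M \<phi> f \<delta> = (SUP h \<in> {h. \<bar>h\<bar> \<le> \<delta>}.
       orl_norm M (\<lambda>k. complex_of_real (\<phi> (of_int k * h)) * fourier_coeff f k))"

definition V_set :: "real \<Rightarrow> (real \<Rightarrow> real) set" where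
  "V_set \<tau> = {v. bounded (v ` {0..\<tau>}) \<and> mono_on {0..\<tau>} v \<and>
       (\<exists>x\<in>{0..\<tau>}. \<exists>y\<in>{0..\<tau>}. v x \<noteq> v y)}"

(* extension of v from [0,tau] by constants, and its right-continuous regularisation;
   the Lebesgue-Stieltjes measure dv on [0,tau] is the interval measure of the latter
   (atoms v(0+)-v(0) at 0 and v(tau)-v(tau-) at tau, total mass v(tau)-v(0)) *)
definition ext_fun :: "real \<Rightarrow> (real \<Rightarrow> real) \<Rightarrow> real \<Rightarrow> real" where
  "ext_fun \<tau> v x = (if x < 0 then v 0 else if x > \<tau> then v \<tau> else v x)"

definition rc_fun :: "real \<Rightarrow> (real \<Rightarrow> real) \<Rightarrow> real \<Rightarrow> real" where
  "rc_fun \<tau> v x = (INF y \<in> {x<..}. ext_fun \<tau> v y)"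

definition LS_measure :: "real \<Rightarrow> (real \<Rightarrow> real) \<Rightarrow> real measure" where
  "LS_measure \<tau> v = interval_measure (rc_fun \<tau> v)"

definition LS_integral :: "real \<Rightarrow> (real \<Rightarrow> real) \<Rightarrow> (real \<Rightarrow> real) \<Rightarrow> real" where
  "LS_integral \<tau> v g = (LINT u:{0..\<tau>}|LS_measure \<tau> v. g u)"

definition I_fun :: "nat \<Rightarrow> (real \<Rightarrow> real) \<Rightarrow> real \<Rightarrow> (real \<Rightarrow> real) \<Rightarrow> real" where
  "I_fun n \<phi> \<tau> v = (INF k \<in> {k::nat. k \<ge> n}.
       LS_integral \<tau> v (\<lambda>u. \<phi> (real k * u / real n)))"

definition C_ratio :: "nat \<Rightarrow> (real \<Rightarrow> real) \<Rightarrow> real \<Rightarrow> (real \<Rightarrow> real) \<Rightarrow> ennreal" where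
  "C_ratio n \<phi> \<tau> v = (if I_fun n \<phi> \<tau> v = 0 then top
       else ennreal ((v \<tau> - v 0) / I_fun n \<phi> \<tau> v))"

definition C_const :: "nat \<Rightarrow> (real \<Rightarrow> real) \<Rightarrow> real \<Rightarrow> ennreal" where
  "C_const n \<phi> \<tau> = (INF v \<in> V_set \<tau>. C_ratio n \<phi> \<tau> v)"

end

theory Submission
  imports Defs "HOL-Probability.Probability"
begin

lemma V_props:
  assumes "v \<in> V_set \<tau>" "0 < \<tau>"
  shows "\<And>x. x \<in> {0..\<tau>} \<Longrightarrow> v 0 \<le> v x \<and> v x \<le> v \<tau>" "v 0 < v \<tau>"
proof -
  have mo: "mono_on {0..\<tau>} v" using assms unfolding V_set_def by auto
  show b: "\<And>x. x \<in> {0..\<tau>} \<Longrightarrow> v 0 \<le> v x \<and> v x \<le> v \<tau>"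
    using mo assms(2) by (auto intro: mono_onD)
  obtain x y where xy: "x \<in> {0..\<tau>}" "y \<in> {0..\<tau>}" "v x \<noteq> v y"
    using assms unfolding V_set_def by auto
  show "v 0 < v \<tau>" using b[OF xy(1)] b[OF xy(2)] xy(3) by linarith
qed

lemma ext_bounds:
  assumes "v \<in> V_set \<tau>" "0 < \<tau>"
  shows "v 0 \<le> ext_fun \<tau> v x \<and> ext_fun \<tau> v x \<le> v \<tau>"
  using V_props[OF assms] unfolding ext_fun_def by auto

lemma ext_mono:
  assumes "v \<in> V_set \<tau>" "0 < \<tau>" "x \<le> y"
  shows "ext_fun \<tau> v x \<le> ext_fun \<tau> v y"
proof -
  have mo: "mono_on {0..\<tau>} v" using assms unfolding V_set_def by auto
  show ?thesis using V_props[OF assms(1,2)] assms(2,3) mono_onD[OF mo, of x y]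
    unfolding ext_fun_def by auto
qed

lemma rc_bdd: 
  assumes "v \<in> V_set \<tau>" "0 < \<tau>"
  shows "bdd_below (ext_fun \<tau> v ` {x<..})"
  using ext_bounds[OF assms] by (intro bdd_belowI[of _ "v 0"]) auto

lemma rc_bounds:
  assumes "v \<in> V_set \<tau>" "0 < \<tau>"
  shows "v 0 \<le> rc_fun \<tau> v x \<and> rc_fun \<tau> v x \<le> v \<tau>"
proof
  show "v 0 \<le> rc_fun \<tau> v x" unfolding rc_fun_def
    using ext_bounds[OF assms] by (intro cINF_greatest) auto
  have "rc_fun \<tau> v x \<le> ext_fun \<tau> v (x+1)" unfolding rc_fun_def
    by (rule cINF_lower[OF rc_bdd[OF assms]]) auto
  then show "rc_fun \<tau> v x \<le> v \<tau>" using ext_bounds[OF assms, of "x+1"] by linarith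
qed

lemma rc_left:
  assumes "v \<in> V_set \<tau>" "0 < \<tau>" "x < 0"
  shows "rc_fun \<tau> v x = v 0"
proof -
  have "rc_fun \<tau> v x \<le> ext_fun \<tau> v (x/2)" unfolding rc_fun_def
    by (rule cINF_lower[OF rc_bdd[OF assms(1,2)]]) (use assms in auto)
  moreover have "ext_fun \<tau> v (x/2) = v 0" using assms unfolding ext_fun_def by auto
  ultimately show ?thesis using rc_bounds[OF assms(1,2), of x] by linarith
qed

lemma rc_right:
  assumes "v \<in> V_set \<tau>" "0 < \<tau>" "\<tau> \<le> x"
  shows "rc_fun \<tau> v x = v \<tau>"
proof -
  have "v \<tau> \<le> rc_fun \<tau> v x" unfolding rc_fun_def
    using assms unfolding ext_fun_def by (intro cINF_greatest) auto
  then show ?thesis using rc_bounds[OF assms(1,2), of x] by linarith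
qed

lemma rc_mono:
  assumes "v \<in> V_set \<tau>" "0 < \<tau>" "x \<le> y"
  shows "rc_fun \<tau> v x \<le> rc_fun \<tau> v y"
  unfolding rc_fun_def
  by (rule cINF_superset_mono) (use assms rc_bdd[OF assms(1,2)] in auto)

lemma rc_rcont:
  assumes "v \<in> V_set \<tau>" "0 < \<tau>"
  shows "continuous (at_right a) (rc_fun \<tau> v)"
proof (subst continuous_at_right_real_increasing)
  show "\<And>x y. x \<le> y \<Longrightarrow> rc_fun \<tau> v x \<le> rc_fun \<tau> v y" using rc_mono[OF assms] .
  show "\<forall>\<epsilon>>0. \<exists>\<delta>>0. rc_fun \<tau> v (a + \<delta>) - rc_fun \<tau> v a < \<epsilon>"
  proof (intro allI impI)
    fix e :: real assume e: "e > 0"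
    have "\<exists>y\<in>{a<..}. ext_fun \<tau> v y < rc_fun \<tau> v a + e"
      using cINF_less_iff[OF _ rc_bdd[OF assms], of a "rc_fun \<tau> v a + e"] e
      unfolding rc_fun_def by auto
    then obtain y where y: "y \<in> {a<..}" "ext_fun \<tau> v y < rc_fun \<tau> v a + e" by blast
    have "rc_fun \<tau> v (a + (y-a)/2) \<le> ext_fun \<tau> v y" unfolding rc_fun_def
      by (rule cINF_lower[OF rc_bdd[OF assms]]) (use y in \<open>auto simp: field_simps\<close>)
    then show "\<exists>\<delta>>0. rc_fun \<tau> v (a + \<delta>) - rc_fun \<tau> v a < e"
      using y by (intro exI[of _ "(y-a)/2"]) auto
  qed
qed


lemma LS_eq: "LS_measure \<tau> v = interval_measure (\<lambda>x. rc_fun \<tau> v x - v 0)"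
  unfolding LS_measure_def interval_measure_def by simp

lemma LS_facts:
  assumes "v \<in> V_set \<tau>" "0 < \<tau>"
  shows "finite_borel_measure (LS_measure \<tau> v)"
    "emeasure (LS_measure \<tau> v) UNIV = v \<tau> - v 0"
    "emeasure (LS_measure \<tau> v) (- {0..\<tau>}) = 0"
    "sets (LS_measure \<tau> v) = sets borel"
    "space (LS_measure \<tau> v) = UNIV"
proof -
  define G where "G x = rc_fun \<tau> v x - v 0" for x
  have LSG: "LS_measure \<tau> v = interval_measure G" unfolding G_def by (rule LS_eq)
  have Gm: "\<And>x y. x \<le> y \<Longrightarrow> G x \<le> G y" unfolding G_def using rc_mono[OF assms] by auto
  have Gr: "\<And>a. continuous (at_right a) G" unfolding G_def
    by (intro continuous_intros rc_rcont[OF assms])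
  have Gb: "(G \<longlongrightarrow> 0) at_bot"
  proof (rule tendsto_eventually)
    show "\<forall>\<^sub>F x in at_bot. G x = 0" unfolding eventually_at_bot_linorder G_def
      using rc_left[OF assms] by (intro exI[of _ "-1"]) auto
  qed
  have Gt: "(G \<longlongrightarrow> v \<tau> - v 0) at_top"
  proof (rule tendsto_eventually)
    show "\<forall>\<^sub>F x in at_top. G x = v \<tau> - v 0" unfolding eventually_at_top_linorder G_def
      using rc_right[OF assms] by (intro exI[of _ "\<tau>"]) auto
  qed
  have m0: "0 \<le> v \<tau> - v 0" using V_props[OF assms] by auto
  show fb: "finite_borel_measure (LS_measure \<tau> v)"
    unfolding LSG by (rule finite_borel_measure_interval_measure[OF Gm Gr Gb Gt m0])
  show U: "emeasure (LS_measure \<tau> v) UNIV = v \<tau> - v 0"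
    unfolding LSG by (rule interval_measure_UNIV[OF Gm Gr Gb Gt m0])
  show sp: "sets (LS_measure \<tau> v) = sets borel" unfolding LSG by simp
  show sp2: "space (LS_measure \<tau> v) = UNIV" unfolding LSG by simp
  interpret F: finite_borel_measure "LS_measure \<tau> v" by (rule fb)
  have Iic: "measure (LS_measure \<tau> v) {..x} = G x" for x
    unfolding LSG by (rule measure_interval_measure_Iic[OF Gm Gr Gb])
  have Iic': "emeasure (LS_measure \<tau> v) {..x} = G x" for x
    unfolding LSG by (rule emeasure_interval_measure_Iic[OF Gm Gr Gb])
  have "(cdf (LS_measure \<tau> v) \<longlongrightarrow> measure (LS_measure \<tau> v) {..<0}) (at_left 0)" by (rule F.cdf_at_left)
  moreover have "(cdf (LS_measure \<tau> v) \<longlongrightarrow> 0) (at_left (0::real))"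
  proof (rule tendsto_eventually)
    show "\<forall>\<^sub>F x in at_left (0::real). cdf (LS_measure \<tau> v) x = 0"
      unfolding eventually_at_left_field cdf_def2 Iic G_def
      using rc_left[OF assms] by (intro exI[of _ "-1"]) auto
  qed
  ultimately have "measure (LS_measure \<tau> v) {..<0} = 0"
    using tendsto_unique[OF trivial_limit_at_left_real] by blast
  then have e1: "emeasure (LS_measure \<tau> v) {..<0} = 0"
    by (simp add: F.emeasure_eq_measure)
  have "emeasure (LS_measure \<tau> v) (UNIV - {..\<tau>}) = emeasure (LS_measure \<tau> v) UNIV - emeasure (LS_measure \<tau> v) {..\<tau>}"
    using emeasure_compl[of "{..\<tau>}" "LS_measure \<tau> v"] sp sp2 Iic' by auto
  also have "\<dots> = 0" using U Iic'[of \<tau>] rc_right[OF assms, of \<tau>] unfolding G_def by simp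
  finally have e2: "emeasure (LS_measure \<tau> v) {\<tau><..} = 0"
    by (metis Compl_eq_Diff_UNIV Compl_atMost)
  have "- {0..\<tau>} = {..<0} \<union> {\<tau><..}" by auto
  then show "emeasure (LS_measure \<tau> v) (- {0..\<tau>}) = 0"
    using emeasure_subadditive[of "{..<0}" "LS_measure \<tau> v" "{\<tau><..}"] e1 e2 sp by auto
qed

lemma LS_AE:
  assumes "v \<in> V_set \<tau>" "0 < \<tau>"
  shows "AE x in LS_measure \<tau> v. x \<in> {0..\<tau>}"
proof (rule AE_I')
  show "- {0..\<tau>} \<in> null_sets (LS_measure \<tau> v)"
    using LS_facts[OF assms] by (auto simp: null_sets_def)
qed (use LS_facts[OF assms] in auto)

lemma LS_integral_eq:
  assumes "v \<in> V_set \<tau>" "0 < \<tau>" "g \<in> borel_measurable borel"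
  shows "LS_integral \<tau> v g = integral\<^sup>L (LS_measure \<tau> v) g"
  unfolding LS_integral_def set_lebesgue_integral_def
  by (rule integral_cong_AE) (use LS_AE[OF assms(1,2)] LS_facts[OF assms(1,2)] assms(3) in auto)

lemma exp_int_integral:
  fixes m :: int
  shows "(LINT x:{0..2*pi}|lebesgue. exp (\<i> * of_int m * complex_of_real x)) = (if m = 0 then 2*pi else 0)"
proof -
  have si: "set_integrable lebesgue {0..2*pi} (\<lambda>x. exp (\<i> * of_int m * complex_of_real x))"
    by (intro absolutely_integrable_continuous_real continuous_intros)
  have eq: "(LINT x:{0..2*pi}|lebesgue. exp (\<i> * of_int m * complex_of_real x)) =
     integral {0..2*pi} (\<lambda>x. exp (\<i> * of_int m * complex_of_real x))"
    by (rule set_lebesgue_integral_eq_integral(2)[OF si])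
  show ?thesis
  proof (cases "m = 0")
    case True then show ?thesis unfolding eq by (simp add: scaleR_conv_of_real)
  next
    case False
    define a where "a = \<i> * of_int m"
    have a0: "a \<noteq> 0" using False by (simp add: a_def)
    have "\<And>t. t \<in> {0..2*pi} \<Longrightarrow> ((\<lambda>x. exp (a * x) / a) has_vector_derivative exp (a * t)) (at t within {0..2*pi})"
      using a0
      by (intro derivative_eq_intros has_complex_derivative_imp_has_vector_derivative [unfolded o_def] | simp)+
    then have "((\<lambda>t. exp(a * of_real t)) has_integral exp(a * complex_of_real (2*pi))/a - exp(a * of_real 0)/a) {0..2*pi}"
      by (intro fundamental_theorem_of_calculus) auto
    moreover have "exp(a * complex_of_real (2*pi)) = 1"
    proof -
      have "a * complex_of_real (2*pi) = (2 * of_int m * pi) * \<i>" by (simp add: a_def)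
      moreover have "exp ((2 * of_int m * pi) * \<i>) = 1"
        by (rule exp_integer_2pi) simp
      ultimately show ?thesis by (simp only:)
    qed
    ultimately have "((\<lambda>t. exp(a * of_real t)) has_integral 0) {0..2*pi}" by simp
    then show ?thesis unfolding eq a_def using False by (simp add: integral_unique)
  qed
qed

lemma fc_integrable:
  assumes "set_integrable lebesgue {0..2*pi} f"
  shows "set_integrable lebesgue {0..2*pi} (\<lambda>x. f x * exp (- (\<i> * of_int j * complex_of_real x)))"
proof (rule set_integrable_bound[OF assms])
  have m: "(\<lambda>x. indicator {0..2*pi} x *\<^sub>R f x) \<in> borel_measurable lebesgue"
    using assms unfolding set_integrable_def by (rule borel_measurable_integrable)
  have "(\<lambda>x. (indicator {0..2*pi} x *\<^sub>R f x) * exp (- (\<i> * of_int j * complex_of_real x))) \<in> borel_measurable lebesgue"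
  proof (rule borel_measurable_times[OF m])
    have "(\<lambda>x. exp (- (\<i> * of_int j * complex_of_real x))) \<in> borel_measurable lborel"
    proof -
      have "(\<lambda>x. exp (- (\<i> * of_int j * complex_of_real x))) \<in> borel_measurable borel"
        by (intro borel_measurable_continuous_onI continuous_intros)
      then show ?thesis by (simp only: measurable_lborel2)
    qed
    then show "(\<lambda>x. exp (- (\<i> * of_int j * complex_of_real x))) \<in> borel_measurable lebesgue"
      by (rule measurable_completion)
  qed
  moreover have "(\<lambda>x. indicator {0..2*pi} x *\<^sub>R (f x * exp (- (\<i> * of_int j * complex_of_real x)))) =
    (\<lambda>x. (indicator {0..2*pi} x *\<^sub>R f x) * exp (- (\<i> * of_int j * complex_of_real x)))"
    by (rule ext) (simp only: mult_scaleR_left)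
  ultimately show "set_borel_measurable lebesgue {0..2*pi} (\<lambda>x. f x * exp (- (\<i> * of_int j * complex_of_real x)))"
    unfolding set_borel_measurable_def by (simp only:)
  show "AE x in lebesgue. x \<in> {0..2*pi} \<longrightarrow> norm (f x * exp (- (\<i> * of_int j * complex_of_real x))) \<le> norm (f x)"
  proof (intro AE_I2 impI)
    fix x
    have "norm (exp (- (\<i> * of_int j * complex_of_real x))) = 1"
      by (simp only: norm_exp_eq_Re) simp
    then show "norm (f x * exp (- (\<i> * of_int j * complex_of_real x))) \<le> norm (f x)"
      by (simp add: norm_mult)
  qed
qed


lemma set_integral_sum_fin:
  fixes g :: "int \<Rightarrow> real \<Rightarrow> complex"
  assumes "\<And>k. k \<in> R \<Longrightarrow> set_integrable M A (g k)"
  shows "(LINT x:A|M. (\<Sum>k\<in>R. g k x)) = (\<Sum>k\<in>R. LINT x:A|M. g k x)"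
proof -
  have "(LINT x:A|M. (\<Sum>k\<in>R. g k x)) = integral\<^sup>L M (\<lambda>x. \<Sum>k\<in>R. indicator A x *\<^sub>R g k x)"
    unfolding set_lebesgue_integral_def by (simp add: scaleR_sum_right)
  also have "\<dots> = (\<Sum>k\<in>R. integral\<^sup>L M (\<lambda>x. indicator A x *\<^sub>R g k x))"
    using integral_sum[where I=R and f="\<lambda>k x. indicator A x *\<^sub>R g k x"] assms
    by (simp add: set_integrable_def)
  finally show ?thesis unfolding set_lebesgue_integral_def .
qed

lemma fc_tail:
  assumes f: "set_integrable lebesgue {0..2*pi} f"
  shows "fourier_coeff (\<lambda>x. f x - (\<Sum>k\<in>{-int N..int N}. fourier_coeff f k * exp (\<i> * of_int k * complex_of_real x))) j
     = (if j \<in> {-int N..int N} then 0 else fourier_coeff f j)"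
proof -
  define R where "R = {-int N..int N}"
  define c where "c = fourier_coeff f"
  have fR: "finite R" unfolding R_def by simp
  define E where "E x = exp (- (\<i> * of_int j * complex_of_real x))" for x
  have prod: "exp (\<i> * of_int k * complex_of_real x) * E x = exp (\<i> * of_int (k - j) * complex_of_real x)" for k x
    unfolding E_def by (simp add: exp_add[symmetric] algebra_simps)
  have eq: "(f x - (\<Sum>k\<in>R. c k * exp (\<i> * of_int k * complex_of_real x))) * E x =
      f x * E x - (\<Sum>k\<in>R. c k * exp (\<i> * of_int (k - j) * complex_of_real x))" for x
  proof -
    have "(f x - (\<Sum>k\<in>R. c k * exp (\<i> * of_int k * complex_of_real x))) * E x =
      f x * E x - (\<Sum>k\<in>R. c k * (exp (\<i> * of_int k * complex_of_real x) * E x))"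
      by (simp add: left_diff_distrib sum_distrib_right mult.assoc)
    then show ?thesis by (simp only: prod)
  qed
  have i1: "set_integrable lebesgue {0..2*pi} (\<lambda>x. f x * E x)"
    unfolding E_def by (rule fc_integrable[OF f])
  have i2: "set_integrable lebesgue {0..2*pi} (\<lambda>x. c k * exp (\<i> * of_int (k - j) * complex_of_real x))" for k
    by (intro absolutely_integrable_continuous_real continuous_intros)
  have i3: "set_integrable lebesgue {0..2*pi} (\<lambda>x. \<Sum>k\<in>R. c k * exp (\<i> * of_int (k - j) * complex_of_real x))"
    by (intro absolutely_integrable_continuous_real continuous_intros)
  have "(LINT x:{0..2*pi}|lebesgue. (\<Sum>k\<in>R. c k * exp (\<i> * of_int (k - j) * complex_of_real x)))
      = (\<Sum>k\<in>R. LINT x:{0..2*pi}|lebesgue. c k * exp (\<i> * of_int (k - j) * complex_of_real x))"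
    by (rule set_integral_sum_fin[OF i2])
  also have "\<dots> = (\<Sum>k\<in>R. (if k = j then c k * (2*pi) else 0))"
  proof (rule sum.cong[OF refl])
    fix k
    show "(LINT x:{0..2*pi}|lebesgue. c k * exp (\<i> * of_int (k - j) * complex_of_real x)) = (if k = j then c k * (2*pi) else 0)"
      unfolding set_integral_mult_right exp_int_integral by simp
  qed
  also have "\<dots> = (if j \<in> R then c j * (2*pi) else 0)"
    using fR by (simp add: sum.delta')
  finally have S: "(LINT x:{0..2*pi}|lebesgue. (\<Sum>k\<in>R. c k * exp (\<i> * of_int (k - j) * complex_of_real x)))
      = (if j \<in> R then c j * (2*pi) else 0)" .
  have "fourier_coeff (\<lambda>x. f x - (\<Sum>k\<in>R. c k * exp (\<i> * of_int k * complex_of_real x))) j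
     = complex_of_real (1 / (2 * pi)) * ((LINT x:{0..2*pi}|lebesgue. f x * E x) -
          (LINT x:{0..2*pi}|lebesgue. (\<Sum>k\<in>R. c k * exp (\<i> * of_int (k - j) * complex_of_real x))))"
    unfolding fourier_coeff_def E_def[symmetric] eq
    by (subst set_integral_diff(2)[OF i1 i3]) simp
  also have "\<dots> = (if j \<in> R then 0 else c j)"
    unfolding S by (auto simp: c_def fourier_coeff_def E_def field_simps)
  finally show ?thesis unfolding R_def c_def .
qed

lemma phi_props:
  assumes "\<phi> \<in> Phi_class"
  shows "continuous_on UNIV \<phi>" "\<And>t. 0 \<le> \<phi> t" "\<And>t. \<phi> (- t) = \<phi> t" "\<exists>B. \<forall>t. \<phi> t \<le> B"
    "{t. \<phi> t = 0} \<in> null_sets lborel"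
proof -
  show "continuous_on UNIV \<phi>" "\<And>t. 0 \<le> \<phi> t" "\<And>t. \<phi> (- t) = \<phi> t" "{t. \<phi> t = 0} \<in> null_sets lborel"
    using assms unfolding Phi_class_def by auto
  have "bounded (range \<phi>)" using assms unfolding Phi_class_def by auto
  then obtain B where "\<forall>x\<in>range \<phi>. norm x \<le> B" by (auto simp: bounded_iff)
  then have "\<phi> t \<le> B" for t by (metis abs_le_D1 rangeI real_norm_def)
  then show "\<exists>B. \<forall>t. \<phi> t \<le> B" by blast
qed

lemma LS_meas:
  assumes "v \<in> V_set \<tau>" "0 < \<tau>" "continuous_on UNIV g"
  shows "g \<in> borel_measurable (LS_measure \<tau> v)"
proof -
  have "g \<in> borel_measurable borel" by (rule borel_measurable_continuous_onI[OF assms(3)])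
  then show ?thesis using measurable_cong_sets[OF LS_facts(4)[OF assms(1,2)] refl] by blast
qed

lemma LS_integrable:
  assumes "v \<in> V_set \<tau>" "0 < \<tau>" "continuous_on UNIV (g::real\<Rightarrow>real)" "\<And>u. \<bar>g u\<bar> \<le> B"
  shows "integrable (LS_measure \<tau> v) g"
proof -
  interpret F: finite_borel_measure "LS_measure \<tau> v" by (rule LS_facts(1)[OF assms(1,2)])
  show ?thesis
    by (rule F.integrable_const_bound[where B=B]) (use assms(4) LS_meas[OF assms(1-3)] in simp_all)
qed

lemma phi_k_cont:
  assumes "\<phi> \<in> Phi_class"
  shows "continuous_on UNIV (\<lambda>u. \<phi> (c * u))"
proof -
  have "continuous_on UNIV (\<lambda>u. c * u)" by (intro continuous_intros)
  then show ?thesis by (rule continuous_on_compose2[OF phi_props(1)[OF assms]]) simp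
qed

lemma I_fun_props:
  assumes "v \<in> V_set \<tau>" "0 < \<tau>" "\<phi> \<in> Phi_class"
  shows "0 \<le> I_fun n \<phi> \<tau> v"
    "\<And>k. n \<le> k \<Longrightarrow> I_fun n \<phi> \<tau> v \<le> integral\<^sup>L (LS_measure \<tau> v) (\<lambda>u. \<phi> (real k * u / real n))"
proof -
  have eqk: "LS_integral \<tau> v (\<lambda>u. \<phi> (real k * u / real n)) = integral\<^sup>L (LS_measure \<tau> v) (\<lambda>u. \<phi> (real k * u / real n))" for k
  proof (rule LS_integral_eq[OF assms(1,2)])
    have "continuous_on UNIV (\<lambda>u. \<phi> ((real k / real n) * u))" by (rule phi_k_cont[OF assms(3)])
    then show "(\<lambda>u. \<phi> (real k * u / real n)) \<in> borel_measurable borel"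
      by (intro borel_measurable_continuous_onI) (simp add: field_simps)
  qed
  have nn: "0 \<le> LS_integral \<tau> v (\<lambda>u. \<phi> (real k * u / real n))" for k
    unfolding eqk using phi_props(2)[OF assms(3)] by (intro integral_nonneg_AE) auto
  show "0 \<le> I_fun n \<phi> \<tau> v" unfolding I_fun_def
    by (rule cINF_greatest) (use nn in auto)
  fix k assume "n \<le> k"
  then have "I_fun n \<phi> \<tau> v \<le> LS_integral \<tau> v (\<lambda>u. \<phi> (real k * u / real n))" unfolding I_fun_def
    by (intro cINF_lower bdd_belowI[of _ 0]) (use nn in auto)
  then show "I_fun n \<phi> \<tau> v \<le> integral\<^sup>L (LS_measure \<tau> v) (\<lambda>u. \<phi> (real k * u / real n))"
    unfolding eqk .
qed

lemma finite_le_infsum_ennreal: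
  fixes h :: "'a \<Rightarrow> ennreal"
  assumes "finite F"
  shows "sum h F \<le> infsum h UNIV"
proof -
  have "sum h F = infsum h F" using assms by simp
  also have "\<dots> \<le> infsum h UNIV"
  proof -
    have s: "h summable_on A" for A by (rule nonneg_summable_on_complete) simp
    show ?thesis using infsum_mono_neutral[of h F h UNIV] s by simp
  qed
  finally show ?thesis .
qed

lemma tail_bound:
  assumes v: "v \<in> V_set \<tau>" "0 < \<tau>" "1 \<le> n" "\<phi> \<in> Phi_class" and Ipos: "0 < I_fun n \<phi> \<tau> v"
    and lam: "lam \<in> Lambda_set M" and F: "finite F"
    and tail: "\<And>k. tail k = (if k \<in> {-int (n-1)..int (n-1)} then 0 else fourier_coeff f k)"
  shows "(\<Sum>k\<in>F. ennreal (lam k * norm (tail k)))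
          \<le> ennreal ((v \<tau> - v 0) / I_fun n \<phi> \<tau> v) * modulus M \<phi> f (\<tau> / real n)"
proof -
  define \<mu> where "\<mu> = LS_measure \<tau> v"
  define I where "I = I_fun n \<phi> \<tau> v"
  define m where "m = v \<tau> - v 0"
  define \<omega> where "\<omega> = modulus M \<phi> f (\<tau> / real n)"
  define a where "a k = lam k * norm (tail k)" for k
  define g where "g u = (\<Sum>k\<in>F. a k * \<phi> (of_int k * (u / real n)))" for u
  have lampos: "\<And>k. 0 < lam k" using lam unfolding Lambda_set_def by auto
  have a0: "0 \<le> a k" for k using lampos[of k] by (simp add: a_def)
  have phi0: "0 \<le> \<phi> t" for t using phi_props(2)[OF v(4)] .
  have phiev: "\<phi> (- t) = \<phi> t" for t using phi_props(3)[OF v(4)] .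
  obtain B where B: "\<And>t. \<phi> t \<le> B" using phi_props(4)[OF v(4)] by blast
  have m0: "0 < m" unfolding m_def using V_props(2)[OF v(1,2)] by simp
  have I0: "0 < I" unfolding I_def by (rule Ipos)
  have contk: "continuous_on UNIV (\<lambda>u. \<phi> (of_int k * (u / real n)))" for k
  proof -
    have "continuous_on UNIV (\<lambda>u. \<phi> ((of_int k / real n) * u))" by (rule phi_k_cont[OF v(4)])
    then show ?thesis by (simp add: field_simps)
  qed
  have intk: "integrable \<mu> (\<lambda>u. \<phi> (of_int k * (u / real n)))" for k
    unfolding \<mu>_def
    by (rule LS_integrable[OF v(1,2) contk, where B=B]) (simp add: abs_of_nonneg phi0 B)
  have key: "a k * I \<le> a k * integral\<^sup>L \<mu> (\<lambda>u. \<phi> (of_int k * (u / real n)))" for k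
  proof (cases "k \<in> {-int (n-1)..int (n-1)}")
    case True
    then have "a k = 0" by (simp add: a_def tail)
    then show ?thesis by simp
  next
    case False
    then have kn: "n \<le> nat \<bar>k\<bar>" using v(3) by auto
    have "I \<le> integral\<^sup>L \<mu> (\<lambda>u. \<phi> (real (nat \<bar>k\<bar>) * u / real n))"
      unfolding I_def \<mu>_def by (rule I_fun_props(2)[OF v(1,2,4) kn])
    also have "(\<lambda>u. \<phi> (real (nat \<bar>k\<bar>) * u / real n)) = (\<lambda>u. \<phi> (of_int k * (u / real n)))"
    proof
      fix u
      show "\<phi> (real (nat \<bar>k\<bar>) * u / real n) = \<phi> (of_int k * (u / real n))"
      proof (cases "0 \<le> k")
        case True then show ?thesis by simp
      next
        case False
        then have "real (nat \<bar>k\<bar>) * u / real n = - (of_int k * (u / real n))" by simp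
        then show ?thesis by (simp add: phiev)
      qed
    qed
    finally show ?thesis using a0 by (intro mult_left_mono) auto
  qed
  have "(\<Sum>k\<in>F. a k) * I \<le> (\<Sum>k\<in>F. a k * integral\<^sup>L \<mu> (\<lambda>u. \<phi> (of_int k * (u / real n))))"
    unfolding sum_distrib_right by (rule sum_mono[OF key])
  also have "\<dots> = integral\<^sup>L \<mu> g"
    unfolding g_def by (subst Bochner_Integration.integral_sum) (use intk in auto)
  finally have S1: "(\<Sum>k\<in>F. a k) * I \<le> integral\<^sup>L \<mu> g" .
  have g0: "0 \<le> g u" for u unfolding g_def using a0 phi0 by (intro sum_nonneg) auto
  have intg: "integrable \<mu> g" unfolding g_def using intk by auto
  have pw: "ennreal (g u) \<le> \<omega>" if u: "u \<in> {0..\<tau>}" for u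
  proof -
    define c where "c = (\<lambda>k. complex_of_real (\<phi> (of_int k * (u / real n))) * fourier_coeff f k)"
    have "ennreal (g u) = (\<Sum>k\<in>F. ennreal (a k * \<phi> (of_int k * (u / real n))))"
      unfolding g_def using a0 phi0 by (subst sum_ennreal) auto
    also have "\<dots> \<le> (\<Sum>k\<in>F. ennreal (lam k * norm (c k)))"
    proof (rule sum_mono, rule ennreal_leI)
      fix k
      have "norm (tail k) \<le> norm (fourier_coeff f k)" by (simp add: tail)
      then have "a k * \<phi> (of_int k * (u / real n)) \<le> lam k * (norm (fourier_coeff f k) * \<phi> (of_int k * (u / real n)))"
        unfolding a_def using lampos[of k] phi0 by (simp add: mult_right_mono mult.assoc)
      also have "\<dots> = lam k * norm (c k)"
        unfolding c_def by (simp add: norm_mult abs_of_nonneg phi0)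
      finally show "a k * \<phi> (of_int k * (u / real n)) \<le> lam k * norm (c k)" .
    qed
    also have "\<dots> \<le> (\<Sum>\<^sub>\<infinity>k\<in>(UNIV::int set). ennreal (lam k * norm (c k)))"
      by (rule finite_le_infsum_ennreal[OF F])
    also have "\<dots> \<le> orl_norm M c"
      unfolding orl_norm_def by (rule SUP_upper[OF lam])
    also have "\<dots> \<le> \<omega>"
      unfolding \<omega>_def modulus_def c_def
    proof (rule SUP_upper)
      show "u / real n \<in> {h. \<bar>h\<bar> \<le> \<tau> / real n}"
        using u v(3) by (auto simp: divide_right_mono)
    qed
    finally show ?thesis .
  qed
  have "ennreal (integral\<^sup>L \<mu> g) = (\<integral>\<^sup>+u. ennreal (g u) \<partial>\<mu>)"
    by (rule nn_integral_eq_integral[symmetric]) (use intg g0 in auto)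
  also have "\<dots> \<le> (\<integral>\<^sup>+u. \<omega> \<partial>\<mu>)"
  proof (rule nn_integral_mono_AE)
    show "AE u in \<mu>. ennreal (g u) \<le> \<omega>"
      using LS_AE[OF v(1,2)] unfolding \<mu>_def by eventually_elim (rule pw)
  qed
  also have "\<dots> = \<omega> * ennreal m"
    unfolding \<mu>_def m_def using LS_facts(2,5)[OF v(1,2)] by simp
  finally have S2: "ennreal (integral\<^sup>L \<mu> g) \<le> \<omega> * ennreal m" .
  have "ennreal ((\<Sum>k\<in>F. a k) * I) \<le> \<omega> * ennreal m"
    using S1 S2 by (meson ennreal_leI order_trans)
  then have "ennreal ((\<Sum>k\<in>F. a k) * I) * ennreal (1 / I) \<le> \<omega> * ennreal m * ennreal (1 / I)"
    by (rule mult_right_mono) simp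
  moreover have "ennreal ((\<Sum>k\<in>F. a k) * I) * ennreal (1 / I) = ennreal (\<Sum>k\<in>F. a k)"
    using I0 a0 by (simp add: ennreal_mult[symmetric] sum_nonneg)
  moreover have "\<omega> * ennreal m * ennreal (1 / I) = ennreal (m / I) * \<omega>"
    using I0 m0 by (simp add: ennreal_mult[symmetric] mult.commute mult.left_commute)
  ultimately have "ennreal (\<Sum>k\<in>F. a k) \<le> ennreal (m / I) * \<omega>" by simp
  moreover have "(\<Sum>k\<in>F. ennreal (lam k * norm (tail k))) = ennreal (\<Sum>k\<in>F. a k)"
    unfolding a_def[symmetric] using a0 by (subst sum_ennreal) auto
  ultimately show ?thesis unfolding m_def I_def \<omega>_def by simp
qed

lemma phi_nonzero:
  assumes "\<phi> \<in> Phi_class" "0 < \<delta>" "k \<noteq> (0::int)"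
  shows "\<exists>h. \<bar>h\<bar> \<le> \<delta> \<and> \<phi> (of_int k * h) \<noteq> 0"
proof (rule ccontr)
  assume "\<not> ?thesis"
  then have z: "\<And>h. \<bar>h\<bar> \<le> \<delta> \<Longrightarrow> \<phi> (of_int k * h) = 0" by blast
  define c where "c = \<bar>real_of_int k\<bar> * \<delta>"
  have c0: "0 < c" unfolding c_def using assms by simp
  have sub: "{0..c} \<subseteq> {t. \<phi> t = 0}"
  proof
    fix t assume t: "t \<in> {0..c}"
    define h where "h = t / \<bar>real_of_int k\<bar>"
    have k0: "0 < \<bar>real_of_int k\<bar>" using assms by simp
    have hb: "\<bar>h\<bar> \<le> \<delta>" using t k0 unfolding h_def c_def by (auto simp: field_simps)
    have "t = \<bar>real_of_int k\<bar> * h" unfolding h_def using k0 by simp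
    then have "\<phi> t = \<phi> (of_int k * h) \<or> \<phi> t = \<phi> (- (of_int k * h))"
      by (cases "0 \<le> k") auto
    then show "t \<in> {t. \<phi> t = 0}" using z[OF hb] phi_props(3)[OF assms(1)] by auto
  qed
  have "{0..c} \<in> null_sets lborel"
    by (rule null_sets_subset[OF phi_props(5)[OF assms(1)] _ sub]) simp
  then have "emeasure lborel {0..c} = 0" by auto
  then show False using c0 by simp
qed

lemma tail_zero:
  assumes "\<phi> \<in> Phi_class" "0 < \<delta>" "modulus M \<phi> f \<delta> = 0"
    and tail: "\<And>k. tail k = (if k \<in> R then 0 else fourier_coeff f k)" and R0: "0 \<in> R"
  shows "orl_norm M tail = 0"
proof -
  have "(\<Sum>\<^sub>\<infinity>k\<in>(UNIV::int set). ennreal (lam k * norm (tail k))) = 0" if lam: "lam \<in> Lambda_set M" for lam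
  proof -
    have lampos: "\<And>k. 0 < lam k" using lam unfolding Lambda_set_def by auto
    have "lam k * norm (tail k) = 0" for k
    proof (cases "k \<in> R")
      case True then show ?thesis by (simp add: tail)
    next
      case False
      then have k0: "k \<noteq> 0" using R0 by auto
      obtain h where h: "\<bar>h\<bar> \<le> \<delta>" "\<phi> (of_int k * h) \<noteq> 0" using phi_nonzero[OF assms(1,2) k0] by blast
      define c where "c = (\<lambda>k. complex_of_real (\<phi> (of_int k * h)) * fourier_coeff f k)"
      have "ennreal (lam k * norm (c k)) = (\<Sum>j\<in>{k}. ennreal (lam j * norm (c j)))" by simp
      also have "\<dots> \<le> (\<Sum>\<^sub>\<infinity>j\<in>(UNIV::int set). ennreal (lam j * norm (c j)))"
        by (rule finite_le_infsum_ennreal) simp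
      also have "\<dots> \<le> orl_norm M c" unfolding orl_norm_def by (rule SUP_upper[OF lam])
      also have "\<dots> \<le> modulus M \<phi> f \<delta>" unfolding modulus_def c_def
        by (rule SUP_upper) (use h in auto)
      finally have "ennreal (lam k * norm (c k)) \<le> 0" using assms(3) by simp
      then have "lam k * norm (c k) \<le> 0" by (simp add: ennreal_le_iff2 ennreal_eq_0_iff)
      moreover have "0 \<le> lam k * norm (c k)" using lampos[of k] by simp
      ultimately have "lam k * norm (c k) = 0" by linarith
      then have "fourier_coeff f k = 0" using lampos[of k] h(2) unfolding c_def by (simp add: norm_mult)
      then show ?thesis by (simp add: tail)
    qed
    then have "(\<lambda>k. ennreal (lam k * norm (tail k))) = (\<lambda>_. 0)" by (intro ext) (metis ennreal_0)
    then show ?thesis by simp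
  qed
  then show ?thesis unfolding orl_norm_def by (metis (no_types, lifting) SUP_bot_conv(2) bot_ennreal)
qed


lemma part1:
  assumes fL: "in_L f" and v: "v \<in> V_set \<tau>" "0 < \<tau>" "1 \<le> n" "\<phi> \<in> Phi_class"
  shows "best_approx M n f \<le> C_ratio n \<phi> \<tau> v * modulus M \<phi> f (\<tau> / real n)"
proof -
  define R where "R = {-int (n-1)..int (n-1)}"
  define tail where "tail k = (if k \<in> R then 0 else fourier_coeff f k)" for k
  define t0 where "t0 x = (\<Sum>k\<in>R. fourier_coeff f k * exp (\<i> * of_int k * complex_of_real x))" for x
  have fi: "set_integrable lebesgue {0..2*pi} f" using fL unfolding in_L_def by auto
  have t0T: "t0 \<in> trig_polys (n-1)" unfolding trig_polys_def t0_def R_def by blast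
  have "best_approx M n f \<le> orl_norm M (fourier_coeff (\<lambda>x. f x - t0 x))"
    unfolding best_approx_def by (rule INF_lower[OF t0T])
  also have "fourier_coeff (\<lambda>x. f x - t0 x) = tail"
    unfolding tail_def t0_def R_def by (rule ext) (rule fc_tail[OF fi])
  finally have E: "best_approx M n f \<le> orl_norm M tail" .
  show ?thesis
  proof (cases "I_fun n \<phi> \<tau> v = 0")
    case True
    then have C: "C_ratio n \<phi> \<tau> v = top" unfolding C_ratio_def by simp
    show ?thesis
    proof (cases "modulus M \<phi> f (\<tau> / real n) = 0")
      case True
      have "orl_norm M tail = 0"
        by (rule tail_zero[OF v(4) _ True, where R=R]) (use v in \<open>auto simp: tail_def R_def\<close>)
      then show ?thesis using E by simp
    next
      case False then show ?thesis using C by simp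
    qed
  next
    case False
    then have Ipos: "0 < I_fun n \<phi> \<tau> v" using I_fun_props(1)[OF v(1,2,4), of n] by linarith
    have C: "C_ratio n \<phi> \<tau> v = ennreal ((v \<tau> - v 0) / I_fun n \<phi> \<tau> v)"
      unfolding C_ratio_def using False by simp
    have "orl_norm M tail \<le> ennreal ((v \<tau> - v 0) / I_fun n \<phi> \<tau> v) * modulus M \<phi> f (\<tau> / real n)"
      unfolding orl_norm_def
    proof (rule SUP_least)
      fix lam assume lam: "lam \<in> Lambda_set M"
      show "(\<Sum>\<^sub>\<infinity>k\<in>(UNIV::int set). ennreal (lam k * norm (tail k)))
          \<le> ennreal ((v \<tau> - v 0) / I_fun n \<phi> \<tau> v) * modulus M \<phi> f (\<tau> / real n)"
      proof (rule infsum_le_finite_sums)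
        show "(\<lambda>k. ennreal (lam k * norm (tail k))) summable_on UNIV"
          by (rule nonneg_summable_on_complete) simp
        fix F :: "int set" assume "finite F"
        then show "(\<Sum>k\<in>F. ennreal (lam k * norm (tail k)))
          \<le> ennreal ((v \<tau> - v 0) / I_fun n \<phi> \<tau> v) * modulus M \<phi> f (\<tau> / real n)"
          by (rule tail_bound[OF v Ipos lam]) (simp add: tail_def R_def)
      qed
    qed
    then show ?thesis using E C by simp
  qed
qed

definition Pm :: "real \<Rightarrow> (real \<Rightarrow> real) \<Rightarrow> real measure" where
  "Pm \<tau> v = scale_measure (ennreal (1 / (v \<tau> - v 0))) (LS_measure \<tau> v)"

lemma Pm_facts:
  assumes v: "v \<in> V_set \<tau>" "0 < \<tau>"
  shows "real_distribution (Pm \<tau> v)" "emeasure (Pm \<tau> v) (- {0..\<tau>}) = 0"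
    "AE x in Pm \<tau> v. x \<in> {0..\<tau>}"
proof -
  have m0: "0 < v \<tau> - v 0" using V_props(2)[OF v] by simp
  have sp: "space (Pm \<tau> v) = UNIV" unfolding Pm_def using LS_facts(5)[OF v] by (simp add: space_scale_measure)
  have st: "sets (Pm \<tau> v) = sets borel" unfolding Pm_def using LS_facts(4)[OF v] by simp
  have "emeasure (Pm \<tau> v) (space (Pm \<tau> v)) = ennreal (1 / (v \<tau> - v 0)) * ennreal (v \<tau> - v 0)"
    unfolding sp unfolding Pm_def using LS_facts(2)[OF v] by simp
  also have "\<dots> = 1" using m0 by (simp add: ennreal_mult[symmetric])
  finally have "prob_space (Pm \<tau> v)" by (rule prob_spaceI)
  then show "real_distribution (Pm \<tau> v)"
    by (intro real_distribution.intro real_distribution_axioms.intro st)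
  show e: "emeasure (Pm \<tau> v) (- {0..\<tau>}) = 0" unfolding Pm_def using LS_facts(3)[OF v] by simp
  show "AE x in Pm \<tau> v. x \<in> {0..\<tau>}"
    by (rule AE_I'[of "- {0..\<tau>}"]) (use e st sp in \<open>auto simp: null_sets_def\<close>)
qed

lemma Pm_integral:
  assumes v: "v \<in> V_set \<tau>" "0 < \<tau>" and g: "continuous_on UNIV g" "\<And>u. 0 \<le> g u"
  shows "integral\<^sup>L (Pm \<tau> v) g = integral\<^sup>L (LS_measure \<tau> v) g / (v \<tau> - v 0)"
proof -
  have m0: "0 < v \<tau> - v 0" using V_props(2)[OF v] by simp
  have gm: "g \<in> borel_measurable (LS_measure \<tau> v)" by (rule LS_meas[OF v g(1)])
  have gm': "g \<in> borel_measurable (Pm \<tau> v)"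
    unfolding Pm_def measurable_cong_sets[OF sets_scale_measure refl] by (rule gm)
  have "integral\<^sup>L (Pm \<tau> v) g = enn2real (\<integral>\<^sup>+ x. ennreal (g x) \<partial>Pm \<tau> v)"
    by (rule integral_eq_nn_integral[OF gm']) (use g in auto)
  also have "(\<integral>\<^sup>+ x. ennreal (g x) \<partial>Pm \<tau> v) = ennreal (1 / (v \<tau> - v 0)) * (\<integral>\<^sup>+ x. ennreal (g x) \<partial>LS_measure \<tau> v)"
    unfolding Pm_def by (rule nn_integral_scale_measure) (use gm in simp)
  also have "enn2real \<dots> = (1 / (v \<tau> - v 0)) * enn2real (\<integral>\<^sup>+ x. ennreal (g x) \<partial>LS_measure \<tau> v)"
    using m0 by (simp add: enn2real_mult)
  also have "enn2real (\<integral>\<^sup>+ x. ennreal (g x) \<partial>LS_measure \<tau> v) = integral\<^sup>L (LS_measure \<tau> v) g"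
    by (rule integral_eq_nn_integral[OF gm, symmetric]) (use g in auto)
  finally show ?thesis by simp
qed

lemma INF_right_cont:
  fixes F :: "real \<Rightarrow> real"
  assumes mono: "\<And>x y. x \<le> y \<Longrightarrow> F x \<le> F y" and rc: "continuous (at_right x) F"
  shows "(INF y\<in>{x<..}. F y) = F x"
proof (rule antisym)
  have bdd: "bdd_below (F ` {x<..})" by (rule bdd_belowI[of _ "F x"]) (auto intro: mono)
  have "(F \<longlongrightarrow> F x) (at_right x)" using rc by (simp add: continuous_within)
  moreover have "\<forall>\<^sub>F y in at_right x. (INF y\<in>{x<..}. F y) \<le> F y"
    unfolding eventually_at_right_field
    by (intro exI[of _ "x+1"]) (auto intro!: cINF_lower bdd)
  ultimately show "(INF y\<in>{x<..}. F y) \<le> F x"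
    by (intro tendsto_lowerbound[of F "F x" "at_right x"]) auto
  show "F x \<le> (INF y\<in>{x<..}. F y)" by (rule cINF_greatest) (auto intro: mono)
qed

lemma vstar:
  assumes P: "real_distribution P" and tau: "0 < \<tau>" and supp: "AE x in P. x \<in> {0..\<tau>}"
  defines "vs \<equiv> (\<lambda>x. if x \<le> 0 then 0 else cdf P x)"
  shows "vs \<in> V_set \<tau>" "LS_measure \<tau> vs = P" "vs \<tau> - vs 0 = 1"
proof -
  interpret P: real_distribution P by (rule P)
  have c0: "cdf P y = 0" if "y < 0" for y
  proof -
    have "AE x in P. \<not> x \<le> y" using supp by eventually_elim (use that in auto)
    then have "\<P>(x in P. x \<le> y) = 0" by (rule P.prob_eq_0_AE)
    moreover have "{x \<in> space P. x \<le> y} = {..y}" by auto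
    ultimately show ?thesis by (simp add: cdf_def)
  qed
  have c1: "cdf P y = 1" if "\<tau> \<le> y" for y
  proof -
    have "AE x in P. x \<le> y \<longleftrightarrow> True" using supp by eventually_elim (use that in auto)
    then have "\<P>(x in P. x \<le> y) = \<P>(x in P. True)" by (rule P.prob_eq_AE) auto
    moreover have "{x \<in> space P. x \<le> y} = {..y}" by auto
    ultimately show ?thesis using P.prob_space P.space_eq_univ by (simp add: cdf_def)
  qed
  have cnn: "0 \<le> cdf P y" for y by (rule P.cdf_nonneg)
  have cle: "cdf P y \<le> 1" for y by (rule P.cdf_bounded_prob)
  have cmono: "\<And>x y. x \<le> y \<Longrightarrow> cdf P x \<le> cdf P y" by (rule P.cdf_nondecreasing)
  have crc: "\<And>a. continuous (at_right a) (cdf P)" by (rule P.cdf_is_right_cont)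
  show vt: "vs \<tau> - vs 0 = 1" unfolding vs_def using tau c1[of \<tau>] by simp
  show V: "vs \<in> V_set \<tau>" unfolding V_set_def
  proof (intro CollectI conjI)
    show "bounded (vs ` {0..\<tau>})" unfolding bounded_iff vs_def
      by (intro exI[of _ 1]) (auto simp: abs_le_iff cle intro: order_trans[OF _ cnn])
    show "mono_on {0..\<tau>} vs" unfolding vs_def
      by (rule mono_onI) (auto simp: cnn cmono)
    show "\<exists>x\<in>{0..\<tau>}. \<exists>y\<in>{0..\<tau>}. vs x \<noteq> vs y"
      using vt tau by (intro bexI[of _ 0] bexI[of _ \<tau>]) auto
  qed
  have exteq: "ext_fun \<tau> vs y = (if y = 0 then 0 else cdf P y)" for y
    unfolding ext_fun_def vs_def using c0 c1[of y] c1[of \<tau>] tau by auto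
  have rc: "rc_fun \<tau> vs x = cdf P x" for x
  proof (cases "0 \<le> x")
    case True
    have "rc_fun \<tau> vs x = (INF y\<in>{x<..}. cdf P y)" unfolding rc_fun_def
      by (rule INF_cong) (use True in \<open>auto simp: exteq\<close>)
    also have "\<dots> = cdf P x" by (rule INF_right_cont[OF cmono crc])
    finally show ?thesis .
  next
    case False
    have bdd: "bdd_below (ext_fun \<tau> vs ` {x<..})" by (rule bdd_belowI[of _ 0]) (auto simp: exteq cnn)
    have "rc_fun \<tau> vs x \<le> ext_fun \<tau> vs (x/2)" unfolding rc_fun_def
      by (rule cINF_lower[OF bdd]) (use False in auto)
    also have "\<dots> = 0" using False c0[of "x/2"] by (simp add: exteq)
    finally have "rc_fun \<tau> vs x \<le> 0" .
    moreover have "0 \<le> rc_fun \<tau> vs x" unfolding rc_fun_def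
      by (rule cINF_greatest) (auto simp: exteq cnn)
    ultimately show ?thesis using c0 False by simp
  qed
  have "LS_measure \<tau> vs = interval_measure (cdf P)"
  proof -
    have "rc_fun \<tau> vs = cdf P" by (rule ext) (rule rc)
    then show ?thesis unfolding LS_measure_def by simp
  qed
  also have "\<dots> = P"
  proof (rule cdf_unique)
    show "real_distribution (interval_measure (cdf P))"
      by (rule real_distribution_interval_measure[OF cmono crc P.cdf_lim_at_bot P.cdf_lim_at_top_prob])
    show "cdf (interval_measure (cdf P)) = cdf P"
      by (rule cdf_interval_measure[OF cmono crc P.cdf_lim_at_bot])
  qed (rule P)
  finally show "LS_measure \<tau> vs = P" .
qed

lemma rd_integrable:
  assumes "real_distribution P" "continuous_on UNIV (g::real\<Rightarrow>real)" "\<And>u. \<bar>g u\<bar> \<le> B"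
  shows "integrable P g"
proof -
  interpret P: real_distribution P by fact
  have "g \<in> borel_measurable borel" by (rule borel_measurable_continuous_onI[OF assms(2)])
  then have "g \<in> borel_measurable P" using measurable_cong_sets[OF P.events_eq_borel refl] by blast
  then show ?thesis by (intro P.integrable_const_bound[where B=B]) (use assms(3) in auto)
qed

lemma part2:
  assumes tau: "0 < \<tau>" and n: "1 \<le> n" and phi: "\<phi> \<in> Phi_class"
  shows "\<exists>v\<in>V_set \<tau>. C_ratio n \<phi> \<tau> v = C_const n \<phi> \<tau>"
proof -
  define q where "q v = I_fun n \<phi> \<tau> v / (v \<tau> - v 0)" for v
  define pk where "pk k = (\<lambda>u. \<phi> (real k * u / real n))" for k :: nat
  obtain B where B: "\<And>t. \<phi> t \<le> B" using phi_props(4)[OF phi] by blast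
  have phi0: "0 \<le> \<phi> t" for t using phi_props(2)[OF phi] .
  have pk_cont: "continuous_on UNIV (pk k)" for k
  proof -
    have "continuous_on UNIV (\<lambda>u. \<phi> ((real k / real n) * u))" by (rule phi_k_cont[OF phi])
    then show ?thesis unfolding pk_def by (simp add: field_simps)
  qed
  have pk_nn: "0 \<le> pk k u" for k u unfolding pk_def by (rule phi0)
  have pk_b: "\<bar>pk k u\<bar> \<le> B" for k u unfolding pk_def using phi0 B by (simp add: abs_of_nonneg)
  have pk_meas: "pk k \<in> borel_measurable borel" for k by (rule borel_measurable_continuous_onI[OF pk_cont])
  have qle: "q v \<le> integral\<^sup>L (Pm \<tau> v) (pk k)" if v: "v \<in> V_set \<tau>" and k: "n \<le> k" for v k
  proof -
    have m0: "0 < v \<tau> - v 0" using V_props(2)[OF v tau] by simp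
    have "I_fun n \<phi> \<tau> v \<le> integral\<^sup>L (LS_measure \<tau> v) (pk k)"
      unfolding pk_def by (rule I_fun_props(2)[OF v tau phi k])
    then have "q v \<le> integral\<^sup>L (LS_measure \<tau> v) (pk k) / (v \<tau> - v 0)"
      unfolding q_def using m0 by (simp add: divide_right_mono)
    also have "\<dots> = integral\<^sup>L (Pm \<tau> v) (pk k)"
      by (rule Pm_integral[OF v tau pk_cont pk_nn, symmetric])
    finally show ?thesis .
  qed
  have q0: "0 \<le> q v" if v: "v \<in> V_set \<tau>" for v
    unfolding q_def using I_fun_props(1)[OF v tau phi, of n] V_props(2)[OF v tau] by simp
  have qB: "q v \<le> B" if v: "v \<in> V_set \<tau>" for v
  proof -
    interpret P: real_distribution "Pm \<tau> v" by (rule Pm_facts(1)[OF v tau])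
    have "integral\<^sup>L (Pm \<tau> v) (pk n) \<le> B"
      by (rule P.integral_le_const) (use rd_integrable[OF Pm_facts(1)[OF v tau] pk_cont pk_b] pk_b in \<open>auto simp: abs_le_iff\<close>)
    then show ?thesis using qle[OF v order_refl] by linarith
  qed
  have idV: "(\<lambda>x. x) \<in> V_set \<tau>" unfolding V_set_def
  proof (intro CollectI conjI)
    show "bounded ((\<lambda>x. x) ` {0..\<tau>})" by simp
    show "mono_on {0..\<tau>} (\<lambda>x. x)" by (rule mono_onI) simp
    show "\<exists>x\<in>{0..\<tau>}. \<exists>y\<in>{0..\<tau>}. x \<noteq> y"
      by (rule bexI[of _ 0], rule bexI[of _ \<tau>]) (use tau in auto)
  qed
  define S where "S = Sup (q ` V_set \<tau>)"
  have ne: "q ` V_set \<tau> \<noteq> {}" using idV by auto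
  have bdd: "bdd_above (q ` V_set \<tau>)" using qB by (intro bdd_aboveI[of _ B]) auto
  have qS: "q v \<le> S" if "v \<in> V_set \<tau>" for v unfolding S_def by (rule cSup_upper[OF _ bdd]) (use that in auto)
  have "\<exists>v\<in>V_set \<tau>. S - inverse (real (Suc j)) < q v" for j
  proof -
    have "S - inverse (real (Suc j)) < Sup (q ` V_set \<tau>)" unfolding S_def by simp
    then show ?thesis using less_cSup_iff[OF ne bdd] by auto
  qed
  then obtain vs where vsV: "\<And>j. vs j \<in> V_set \<tau>" and vsq: "\<And>j. S - inverse (real (Suc j)) < q (vs j)"
    by metis
  have qlim: "(\<lambda>j. q (vs j)) \<longlonglongrightarrow> S"
  proof (rule tendsto_sandwich[of "\<lambda>j. S - inverse (real (Suc j))" _ _ "\<lambda>_. S"])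
    show "\<forall>\<^sub>F j in sequentially. S - inverse (real (Suc j)) \<le> q (vs j)" using vsq by (intro always_eventually allI less_imp_le)
    show "\<forall>\<^sub>F j in sequentially. q (vs j) \<le> S" using qS[OF vsV] by (intro always_eventually allI)
    show "(\<lambda>j. S - inverse (real (Suc j))) \<longlonglongrightarrow> S"
      using tendsto_diff[OF tendsto_const LIMSEQ_inverse_real_of_nat, of S] by simp
  qed simp
  define Ps where "Ps j = Pm \<tau> (vs j)" for j
  have Psd: "real_distribution (Ps j)" for j unfolding Ps_def by (rule Pm_facts(1)[OF vsV tau])
  have PsAE: "AE x in Ps j. x \<in> {0..\<tau>}" for j unfolding Ps_def by (rule Pm_facts(3)[OF vsV tau])
  have tight: "tight Ps"
    unfolding tight_def
  proof (intro conjI allI impI)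
    show "real_distribution (Ps j)" for j by (rule Psd)
    fix e :: real assume e: "0 < e"
    have "measure (Ps j) {-1<..\<tau>} = 1" for j
    proof -
      interpret P: real_distribution "Ps j" by (rule Psd)
      have "AE x in Ps j. x \<in> {-1<..\<tau>}" using PsAE[of j] by eventually_elim auto
      then show ?thesis by (subst (asm) P.AE_in_set_eq_1) auto
    qed
    then show "\<exists>a b. a < b \<and> (\<forall>j. 1 - e < measure (Ps j) {a<..b})"
      using e tau by (intro exI[of _ "-1"] exI[of _ \<tau>]) auto
  qed
  obtain r Pst where r: "strict_mono r" and Pst: "real_distribution Pst" and wc: "weak_conv_m (Ps \<circ> id \<circ> r) Pst"
    using tight_imp_convergent_subsubsequence[OF tight strict_mono_id] by blast
  have conv: "(\<lambda>j. integral\<^sup>L (Ps (r j)) g) \<longlonglongrightarrow> integral\<^sup>L Pst g"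
    if g: "continuous_on UNIV g" "\<And>u. \<bar>g u\<bar> \<le> C" for g :: "real \<Rightarrow> real" and C
  proof -
    have "(\<lambda>j. integral\<^sup>L ((Ps \<circ> id \<circ> r) j) g) \<longlonglongrightarrow> integral\<^sup>L Pst g"
    proof (rule weak_conv_imp_integral_bdd_continuous_conv[OF _ Pst wc])
      show "real_distribution ((Ps \<circ> id \<circ> r) j)" for j using Psd by simp
      show "isCont g x" for x using g(1) by (simp add: continuous_on_eq_continuous_at)
      show "norm (g x) \<le> C" for x using g(2) by simp
    qed
    then show ?thesis by simp
  qed
  define g0 where "g0 x = min 1 (max 0 (- x) + max 0 (x - \<tau>))" for x
  have g0c: "continuous_on UNIV g0" unfolding g0_def by (intro continuous_intros)
  have g0b: "\<bar>g0 u\<bar> \<le> 1" for u unfolding g0_def by auto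
  have g0nn: "0 \<le> g0 u" for u unfolding g0_def by auto
  have "(\<lambda>j. integral\<^sup>L (Ps (r j)) g0) \<longlonglongrightarrow> integral\<^sup>L Pst g0" by (rule conv[OF g0c g0b])
  moreover have "integral\<^sup>L (Ps (r j)) g0 = 0" for j
    by (rule integral_eq_zero_AE) (use PsAE[of "r j"] in \<open>eventually_elim, simp add: g0_def\<close>)
  ultimately have "integral\<^sup>L Pst g0 = 0" using LIMSEQ_unique[OF _ tendsto_const] by simp
  then have "AE x in Pst. g0 x = 0"
    by (subst (asm) integral_nonneg_eq_0_iff_AE) (use rd_integrable[OF Pst g0c g0b] g0nn in auto)
  then have PstAE: "AE x in Pst. x \<in> {0..\<tau>}"
  proof eventually_elim
    fix x assume "g0 x = 0"
    then show "x \<in> {0..\<tau>}" unfolding g0_def by (auto simp: min_def max_def split: if_splits)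
  qed
  define vst where "vst = (\<lambda>x. if x \<le> 0 then 0 else cdf Pst x)"
  have vstV: "vst \<in> V_set \<tau>" and vstL: "LS_measure \<tau> vst = Pst" and vstm: "vst \<tau> - vst 0 = 1"
    using vstar[OF Pst tau PstAE] unfolding vst_def by auto
  have Ist: "S \<le> I_fun n \<phi> \<tau> vst"
    unfolding I_fun_def
  proof (rule cINF_greatest)
    show "{k. n \<le> k} \<noteq> {}" by auto
    fix k assume k: "k \<in> {k. n \<le> k}"
    have "S \<le> integral\<^sup>L Pst (pk k)"
    proof (rule LIMSEQ_le)
      show "(\<lambda>j. q (vs (r j))) \<longlonglongrightarrow> S" using LIMSEQ_subseq_LIMSEQ[OF qlim r] by (simp add: o_def)
      show "(\<lambda>j. integral\<^sup>L (Ps (r j)) (pk k)) \<longlonglongrightarrow> integral\<^sup>L Pst (pk k)" by (rule conv[OF pk_cont pk_b])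
      show "\<exists>N. \<forall>j\<ge>N. q (vs (r j)) \<le> integral\<^sup>L (Ps (r j)) (pk k)"
        using qle[OF vsV] k unfolding Ps_def by auto
    qed
    also have "integral\<^sup>L Pst (pk k) = LS_integral \<tau> vst (pk k)"
      using LS_integral_eq[OF vstV tau pk_meas] vstL by simp
    finally show "S \<le> LS_integral \<tau> vst (\<lambda>u. \<phi> (real k * u / real n))" unfolding pk_def .
  qed
  show ?thesis
  proof (intro bexI[OF _ vstV] antisym)
    show "C_const n \<phi> \<tau> \<le> C_ratio n \<phi> \<tau> vst" unfolding C_const_def by (rule INF_lower[OF vstV])
    show "C_ratio n \<phi> \<tau> vst \<le> C_const n \<phi> \<tau>" unfolding C_const_def
    proof (rule INF_greatest)
      fix v assume v: "v \<in> V_set \<tau>"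
      show "C_ratio n \<phi> \<tau> vst \<le> C_ratio n \<phi> \<tau> v"
      proof (cases "I_fun n \<phi> \<tau> v = 0")
        case True then show ?thesis unfolding C_ratio_def by simp
      next
        case False
        have m0: "0 < v \<tau> - v 0" using V_props(2)[OF v tau] by simp
        have Ipos: "0 < I_fun n \<phi> \<tau> v" using False I_fun_props(1)[OF v tau phi, of n] by linarith
        have qv: "I_fun n \<phi> \<tau> v / (v \<tau> - v 0) \<le> I_fun n \<phi> \<tau> vst" using qS[OF v] Ist unfolding q_def by linarith
        have qpos: "0 < I_fun n \<phi> \<tau> v / (v \<tau> - v 0)" using Ipos m0 by simp
        have Istpos: "0 < I_fun n \<phi> \<tau> vst" using qv qpos by linarith
        have "I_fun n \<phi> \<tau> v \<le> I_fun n \<phi> \<tau> vst * (v \<tau> - v 0)" using qv m0 by (simp add: pos_divide_le_eq)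
        then have "1 / I_fun n \<phi> \<tau> vst \<le> (v \<tau> - v 0) / I_fun n \<phi> \<tau> v"
          using Ipos Istpos by (simp add: divide_simps mult.commute)
        then show ?thesis unfolding C_ratio_def using False Istpos vstm
          by (auto intro: ennreal_leI)
      qed
    qed
  qed
qed

theorem theorem1:
  fixes M :: "int \<Rightarrow> real \<Rightarrow> real" and f :: "real \<Rightarrow> complex"
    and \<tau> :: real and n :: nat and \<phi> :: "real \<Rightarrow> real"
  assumes "\<And>k. orlicz_fun (M k)"
    and "in_L f" and "lux_norm M (fourier_coeff f) < top"
    and "\<tau> > 0" and "n \<ge> 1" and "\<phi> \<in> Phi_class"
  shows "best_approx M n f \<le> C_const n \<phi> \<tau> * modulus M \<phi> f (\<tau> / real n)
         \<and> (\<exists>v\<in>V_set \<tau>. C_ratio n \<phi> \<tau> v = C_const n \<phi> \<tau>)"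
proof -
  obtain v where v: "v \<in> V_set \<tau>" "C_ratio n \<phi> \<tau> v = C_const n \<phi> \<tau>"
    using part2[OF assms(4,5,6)] by blast
  have "best_approx M n f \<le> C_ratio n \<phi> \<tau> v * modulus M \<phi> f (\<tau> / real n)"
    by (rule part1[OF assms(2) v(1) assms(4,5,6)])
  then show ?thesis using v by auto
qed

end
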